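(* Let $T>0$, $\mathbb M,\mathbb N\in\mathcal P(\mathcal P(\mathcal X))$ and $(\mathbb C,\mathbb V)\in\vec{\mathbb{CE}}_T(\mathbb M,\mathbb N)$ with $\int_0^T\vec{\mathbb A}(\mathbb C(t),\mathbb V(t))dt<\infty$. Then there exists a measurable $\mathbb\Psi:[0,T]\times\mathcal P(\mathcal X)\to\mathbb R^{\mathcal X}$ such that $(\mathbb C,\mathbb\Psi)\in\mathbb{CE}_T(\mathbb M,\mathbb N)$ and $$\int_0^T\mathbb A(\mathbb C(t),\mathbb\Psi(t))dt\le\int_0^T\vec{\mathbb A}(\mathbb C(t),\mathbb V(t))dt.$$
   Context: $\mathcal X=\{1,\dots,d\}$ finite, $\mathcal P(\mathcal X)\subset\mathbb R^{\mathcal X}$. $\{Q(\mu)\}$ rate matrices ($Q_{xy}\ge0$, $x\ne y$), each irreducible and reversible w.r.t. a Gibbs measure, with $\mu\mapsto Q_{xy}(\mu)$ Lipschitz. $\Lambda(s,t)=\int_0^1s^\alpha t^{1-\alpha}d\alpha$, $w_{xy}(\mu)=\Lambda(\mu_xQ_{xy}(\mu),\mu_yQ_{yx}(\mu))$. $\alpha(v,w)=v^2/w$ if $w>0$, $0$ if $v=w=0$, $+\infty$ else; $\vec{\mathcal A}(\mu,v)=\frac12\sum_{x,y}\alpha(v_{xy},w_{xy}(\mu))$, $\mathcal A(\mu,\psi)=\frac12\sum_{x,y}(\psi_y-\psi_x)^2w_{xy}(\mu)$. Lifted: for $\mathbb V:[0,T]\times\mathcal P(\mathcal X)\to\mathbb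 R^{\mathcal X\times\mathcal X}$, $(\delta\mathbb V)_x=\frac12\sum_y(\mathbb V_{xy}-\mathbb V_{yx})$. $(\mathbb C,\mathbb V)\in\vec{\mathbb{CE}}_T(\mathbb M,\mathbb N)$ if $t\mapsto\mathbb C(t)\in\mathcal P(\mathcal P(\mathcal X))$ is weakly continuous, $\mathbb C(0)=\mathbb M$, $\mathbb C(T)=\mathbb N$, $\mathbb V$ is measurable and integrable w.r.t. $\mathbb C(t,d\nu)dt$, and $\int_0^T\int(\partial_t\varphi-\langle\nabla\varphi,\delta\mathbb V\rangle)\mathbb C(t,d\nu)dt=0$ for all $\varphi\in C^1_c((0,T)\times\mathbb R^{\mathcal X})$. $(\mathbb C,\mathbb\Psi)\in\mathbb{CE}_T(\mathbb M,\mathbb N)$ if this holds with $\mathbb V_{xy}(t,\nu)=w_{xy}(\nu)(\mathbb\Psi_y(t,\nu)-\mathbb\Psi_x(t,\nu))$. $\vec{\mathbb A}(\mathbb M,\mathbb V)=\int\vec{\mathcal A}(\nu,\mathbb V(\nu))\mathbb M(d\nu)$, $\mathbb A(\mathbb M,\mathbb\Psi)=\int\mathcal A(\nu,\mathbb\Psi(\nu))\mathbb M(d\nu)$. *)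

theory Defs
  imports "HOL-Probability.Probability"
begin

text \<open>States: a finite type 'x. Probability vectors P(X) live in real^'x.\<close>

definition prob_simplex :: "(real^'x::finite) set" where
  "prob_simplex = {\<mu>. (\<forall>x. 0 \<le> \<mu>$x) \<and> (\<Sum>x\<in>UNIV. \<mu>$x) = 1}"

text \<open>P(P(X)): Borel probability measures on real^'x concentrated on the prob_simplex.\<close>
definition PP :: "(real^'x::finite) measure set" where
  "PP = {M. prob_space M \<and> sets M = sets borel \<and> emeasure M prob_simplex = 1}"

definition irreducible_rates :: "('x \<Rightarrow> 'x \<Rightarrow> real) \<Rightarrow> bool" where
  "irreducible_rates q \<longleftrightarrow> (\<forall>x y. (x, y) \<in> {(a, b). a \<noteq> b \<and> 0 < q a b}\<^sup>*)"

text \<open>Reversibility w.r.t. a Gibbs measure, i.e. a strictly positive probability vector.\<close>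
definition reversible_gibbs :: "('x::finite \<Rightarrow> 'x \<Rightarrow> real) \<Rightarrow> bool" where
  "reversible_gibbs q \<longleftrightarrow> (\<exists>\<pi>::'x \<Rightarrow> real. (\<forall>x. 0 < \<pi> x) \<and> (\<Sum>x\<in>UNIV. \<pi> x) = 1 \<and>
      (\<forall>x y. \<pi> x * q x y = \<pi> y * q y x))"

text \<open>Logarithmic mean \<Lambda>(s,t) = \<integral>_0^1 s^a t^(1-a) da.\<close>
definition Lam :: "real \<Rightarrow> real \<Rightarrow> real" where
  "Lam s t = integral {0..1} (\<lambda>a. s powr a * t powr (1 - a))"

definition wt :: "(real^'x \<Rightarrow> 'x \<Rightarrow> 'x \<Rightarrow> real) \<Rightarrow> real^'x \<Rightarrow> 'x \<Rightarrow> 'x \<Rightarrow> real" where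
  "wt Q \<mu> x y = Lam (\<mu>$x * Q \<mu> x y) (\<mu>$y * Q \<mu> y x)"

definition alpha :: "real \<Rightarrow> real \<Rightarrow> ennreal" where
  "alpha v w = (if 0 < w then ennreal (v\<^sup>2 / w) else if v = 0 \<and> w = 0 then 0 else \<infinity>)"

text \<open>Actions; sums over ordered pairs x \<noteq> y (diagonal terms of the rate matrix play no role).\<close>
definition vecA :: "(real^'x::finite \<Rightarrow> 'x \<Rightarrow> 'x \<Rightarrow> real) \<Rightarrow> real^'x \<Rightarrow> ('x \<Rightarrow> 'x \<Rightarrow> real) \<Rightarrow> ennreal" where
  "vecA Q \<mu> v = ennreal (1/2) * (\<Sum>x\<in>UNIV. \<Sum>y\<in>UNIV - {x}. alpha (v x y) (wt Q \<mu> x y))"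

definition Aact :: "(real^'x::finite \<Rightarrow> 'x \<Rightarrow> 'x \<Rightarrow> real) \<Rightarrow> real^'x \<Rightarrow> ('x \<Rightarrow> real) \<Rightarrow> ennreal" where
  "Aact Q \<mu> \<psi> = ennreal ((1/2) * (\<Sum>x\<in>UNIV. \<Sum>y\<in>UNIV - {x}. (\<psi> y - \<psi> x)\<^sup>2 * wt Q \<mu> x y))"

definition divV :: "('x::finite \<Rightarrow> 'x \<Rightarrow> real) \<Rightarrow> real^'x" where
  "divV v = (\<chi> x. (1/2) * (\<Sum>y\<in>UNIV. v x y - v y x))"

definition weakly_cont :: "real \<Rightarrow> (real \<Rightarrow> (real^'x::finite) measure) \<Rightarrow> bool" where
  "weakly_cont T C \<longleftrightarrow> (\<forall>f :: real^'x \<Rightarrow> real. continuous_on UNIV f \<and> bounded (range f) \<longrightarrow>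
      continuous_on {0..T} (\<lambda>t. \<integral>\<nu>. f \<nu> \<partial>C t))"

text \<open>\<phi> \<in> C^1_c((0,T) \<times> R^X) with gradient D (D(z) = (\<partial>_t\<phi>, \<nabla>\<phi>)).\<close>
definition test_fun :: "real \<Rightarrow> (real \<times> (real^'x::finite) \<Rightarrow> real) \<Rightarrow> (real \<times> (real^'x) \<Rightarrow> real \<times> (real^'x)) \<Rightarrow> bool" where
  "test_fun T \<phi> D \<longleftrightarrow> (\<forall>z. (\<phi> has_derivative (\<lambda>h. D z \<bullet> h)) (at z)) \<and> continuous_on UNIV D \<and>
      (\<exists>K. compact K \<and> K \<subseteq> {0<..<T} \<times> UNIV \<and> (\<forall>z. z \<notin> K \<longrightarrow> \<phi> z = 0))"

definition vCE :: "real \<Rightarrow> (real^'x::finite) measure \<Rightarrow> (real^'x) measure \<Rightarrow> (real \<Rightarrow> (real^'x) measure)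
     \<Rightarrow> (real \<Rightarrow> real^'x \<Rightarrow> 'x \<Rightarrow> 'x \<Rightarrow> real) \<Rightarrow> bool" where
  "vCE T M N C V \<longleftrightarrow>
     (\<forall>t\<in>{0..T}. C t \<in> PP) \<and> weakly_cont T C \<and> C 0 = M \<and> C T = N \<and>
     (\<forall>x y. (\<lambda>(t, \<nu>). V t \<nu> x y) \<in> borel_measurable borel) \<and>
     (\<forall>x y. (\<integral>\<^sup>+ t. indicator {0..T} t * (\<integral>\<^sup>+ \<nu>. ennreal \<bar>V t \<nu> x y\<bar> \<partial>C t) \<partial>lborel) < \<infinity>) \<and>
     (\<forall>\<phi> D. test_fun T \<phi> D \<longrightarrow>
        (\<integral>t. indicator {0..T} t * (\<integral>\<nu>. fst (D (t, \<nu>)) - snd (D (t, \<nu>)) \<bullet> divV (V t \<nu>) \<partial>C t) \<partial>lborel) = 0)"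

definition CE :: "(real^'x::finite \<Rightarrow> 'x \<Rightarrow> 'x \<Rightarrow> real) \<Rightarrow> real \<Rightarrow> (real^'x) measure \<Rightarrow> (real^'x) measure
     \<Rightarrow> (real \<Rightarrow> (real^'x) measure) \<Rightarrow> (real \<Rightarrow> real^'x \<Rightarrow> 'x \<Rightarrow> real) \<Rightarrow> bool" where
  "CE Q T M N C \<Psi> \<longleftrightarrow> vCE T M N C (\<lambda>t \<nu> x y. wt Q \<nu> x y * (\<Psi> t \<nu> y - \<Psi> t \<nu> x))"

definition vAction :: "(real^'x::finite \<Rightarrow> 'x \<Rightarrow> 'x \<Rightarrow> real) \<Rightarrow> real \<Rightarrow> (real \<Rightarrow> (real^'x) measure)
     \<Rightarrow> (real \<Rightarrow> real^'x \<Rightarrow> 'x \<Rightarrow> 'x \<Rightarrow> real) \<Rightarrow> ennreal" where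
  "vAction Q T C V = (\<integral>\<^sup>+ t. indicator {0..T} t * (\<integral>\<^sup>+ \<nu>. vecA Q \<nu> (V t \<nu>) \<partial>C t) \<partial>lborel)"

definition Action :: "(real^'x::finite \<Rightarrow> 'x \<Rightarrow> 'x \<Rightarrow> real) \<Rightarrow> real \<Rightarrow> (real \<Rightarrow> (real^'x) measure)
     \<Rightarrow> (real \<Rightarrow> real^'x \<Rightarrow> 'x \<Rightarrow> real) \<Rightarrow> ennreal" where
  "Action Q T C \<Psi> = (\<integral>\<^sup>+ t. indicator {0..T} t * (\<integral>\<^sup>+ \<nu>. Aact Q \<nu> (\<Psi> t \<nu>) \<partial>C t) \<partial>lborel)"

end

theory Submission
  imports Defs
begin

definition cc :: "('x::finite \<Rightarrow> 'x \<Rightarrow> real) \<Rightarrow> 'x \<Rightarrow> 'x \<Rightarrow> real" where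
  "cc w z y = w y z + w z y"

definition Mat :: "real \<Rightarrow> ('x::finite \<Rightarrow> 'x \<Rightarrow> real) \<Rightarrow> real^'x^'x" where
  "Mat e w = (\<chi> z y. (if z = y then e + (\<Sum>u\<in>UNIV. cc w z u) else 0) - cc w z y)"

definition bv :: "('x::finite \<Rightarrow> 'x \<Rightarrow> real) \<Rightarrow> real^'x" where
  "bv V = (\<chi> z. \<Sum>y\<in>UNIV. V y z - V z y)"

definition Bf :: "('x::finite \<Rightarrow> 'x \<Rightarrow> real) \<Rightarrow> real^'x \<Rightarrow> real^'x \<Rightarrow> real" where
  "Bf w p q = (\<Sum>x\<in>UNIV. \<Sum>y\<in>UNIV. w x y * (p$y - p$x) * (q$y - q$x))"

definition Lf :: "('x::finite \<Rightarrow> 'x \<Rightarrow> real) \<Rightarrow> real^'x \<Rightarrow> real" where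
  "Lf V p = (\<Sum>x\<in>UNIV. \<Sum>y\<in>UNIV. V x y * (p$y - p$x))"

lemma Mat_split: "Mat e w *v q = Mat 0 w *v q + e *\<^sub>R q"
proof -
  have "(Mat e w *v q)$z = (Mat 0 w *v q)$z + e * q$z" for z
  proof -
    have "(Mat e w *v q)$z = (\<Sum>y\<in>UNIV. (Mat 0 w$z$y) * q$y + (if z = y then e * q$y else 0))"
      unfolding matrix_vector_mult_def Mat_def by (auto intro!: sum.cong simp: algebra_simps)
    also have "\<dots> = (Mat 0 w *v q)$z + e * q$z"
      by (simp add: sum.distrib matrix_vector_mult_def)
    finally show ?thesis .
  qed
  then show ?thesis by (simp add: vec_eq_iff)
qed

lemma inner_Mat0: "p \<bullet> (Mat 0 w *v q) = Bf w p q"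
proof -
  have "p \<bullet> (Mat 0 w *v q) = (\<Sum>z\<in>UNIV. \<Sum>y\<in>UNIV. cc w z y * p$z * (q$z - q$y))"
  proof -
    have "(Mat 0 w *v q)$z = (\<Sum>y\<in>UNIV. cc w z y * (q$z - q$y))" for z
    proof -
      have "(Mat 0 w *v q)$z = (\<Sum>y\<in>UNIV. (if z = y then (\<Sum>u\<in>UNIV. cc w z u) * q$y else 0) - cc w z y * q$y)"
        unfolding matrix_vector_mult_def Mat_def by (auto intro!: sum.cong simp: algebra_simps)
      also have "\<dots> = (\<Sum>u\<in>UNIV. cc w z u) * q$z - (\<Sum>y\<in>UNIV. cc w z y * q$y)"
        by (simp add: sum_subtractf)
      also have "\<dots> = (\<Sum>y\<in>UNIV. cc w z y * (q$z - q$y))"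
        by (simp add: sum_distrib_left sum_distrib_right sum_subtractf algebra_simps)
      finally show ?thesis .
    qed
    then show ?thesis by (simp add: inner_vec_def sum_distrib_left algebra_simps)
  qed
  also have "\<dots> = (\<Sum>z\<in>UNIV. \<Sum>y\<in>UNIV. w y z * p$z * (q$z - q$y)) + (\<Sum>z\<in>UNIV. \<Sum>y\<in>UNIV. w z y * p$z * (q$z - q$y))"
    unfolding cc_def sum.distrib[symmetric] by (intro sum.cong refl) (simp add: algebra_simps)
  also have "(\<Sum>z\<in>UNIV. \<Sum>y\<in>UNIV. w y z * p$z * (q$z - q$y)) = (\<Sum>x\<in>UNIV. \<Sum>y\<in>UNIV. w x y * p$y * (q$y - q$x))"
    by (rule sum.swap)
  finally show ?thesis unfolding Bf_def
    by (simp add: sum.distrib[symmetric] sum_subtractf[symmetric] algebra_simps)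
qed

lemma inner_bv: "p \<bullet> bv V = Lf V p"
proof -
  have "p \<bullet> bv V = (\<Sum>z\<in>UNIV. \<Sum>y\<in>UNIV. V y z * p$z) - (\<Sum>z\<in>UNIV. \<Sum>y\<in>UNIV. V z y * p$z)"
    by (simp add: inner_vec_def bv_def sum_distrib_left sum_subtractf algebra_simps)
  also have "(\<Sum>z\<in>UNIV. \<Sum>y\<in>UNIV. V y z * p$z) = (\<Sum>x\<in>UNIV. \<Sum>y\<in>UNIV. V x y * p$y)"
    by (rule sum.swap)
  finally show ?thesis unfolding Lf_def by (simp add: sum_subtractf[symmetric] algebra_simps)
qed

lemma Bf_nonneg: assumes "\<And>x y. 0 \<le> w x y" shows "0 \<le> Bf w p p"
proof -
  have "0 \<le> w x y * ((p$y - p$x) * (p$y - p$x))" for x y using assms[of x y] by simp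
  then show ?thesis unfolding Bf_def by (auto intro!: sum_nonneg simp: mult.assoc)
qed

definition Sf :: "('x::finite \<Rightarrow> 'x \<Rightarrow> real) \<Rightarrow> ('x \<Rightarrow> 'x \<Rightarrow> real) \<Rightarrow> real" where
  "Sf w V = (\<Sum>x\<in>UNIV. \<Sum>y\<in>UNIV. if 0 < w x y then (V x y)\<^sup>2 / w x y else 0)"

lemma term_ineq:
  fixes w v g :: real
  assumes "0 \<le> w" "v \<noteq> 0 \<Longrightarrow> 0 < w"
  shows "v * g \<le> (if 0 < w then v\<^sup>2 / w else 0) / 2 + w * g\<^sup>2 / 2"
proof (cases "0 < w")
  case True
  have "0 \<le> (v - w * g)\<^sup>2 / w" using True by simp
  also have "(v - w * g)\<^sup>2 / w = v\<^sup>2 / w - 2 * v * g + w * g\<^sup>2"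
    using True by (simp add: power2_eq_square field_simps)
  finally show ?thesis using True by simp
next
  case False
  then show ?thesis using assms by (cases "v = 0") auto
qed

lemma Lf_le:
  assumes "\<And>x y. 0 \<le> w x y" "\<And>x y. V x y \<noteq> 0 \<Longrightarrow> 0 < w x y"
  shows "Lf V p \<le> Sf w V / 2 + Bf w p p / 2"
proof -
  have "Lf V p \<le> (\<Sum>x\<in>UNIV. \<Sum>y\<in>UNIV. (if 0 < w x y then (V x y)\<^sup>2 / w x y else 0) / 2 + w x y * (p$y - p$x)\<^sup>2 / 2)"
    unfolding Lf_def by (intro sum_mono term_ineq assms)
  also have "\<dots> = Sf w V / 2 + Bf w p p / 2"
    unfolding Sf_def Bf_def by (simp add: sum.distrib sum_divide_distrib power2_eq_square algebra_simps)
  finally show ?thesis .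
qed

lemma Mat_inner: "q \<bullet> (Mat e w *v q) = Bf w q q + e * (q \<bullet> q)"
  using Mat_split[of e w q] by (simp add: inner_add_right inner_Mat0)

lemma det_Mat:
  assumes w: "\<And>x y. 0 \<le> w x y" and e: "0 < e"
  shows "det (Mat e w) \<noteq> 0"
proof -
  have "inj ((*v) (Mat e w))"
  proof (rule injI)
    fix x y assume "Mat e w *v x = Mat e w *v y"
    then have "Mat e w *v (x - y) = 0" by (simp add: matrix_vector_mult_diff_distrib)
    then have "Bf w (x-y) (x-y) + e * ((x-y) \<bullet> (x-y)) = 0"
      using Mat_inner[of "x-y" e w] by simp
    moreover have "0 \<le> Bf w (x-y) (x-y)" by (rule Bf_nonneg[OF w])
    moreover have "0 \<le> e * ((x-y) \<bullet> (x-y))" using e by simp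
    ultimately have "e * ((x-y) \<bullet> (x-y)) = 0" by linarith
    then show "x = y" using e by simp
  qed
  then show ?thesis
    using det_nz_iff_inj[OF matrix_vector_mul_linear[of "Mat e w"]]
    by (simp add: matrix_of_matrix_vector_mul)
qed

definition sol :: "real \<Rightarrow> ('x::finite \<Rightarrow> 'x \<Rightarrow> real) \<Rightarrow> ('x \<Rightarrow> 'x \<Rightarrow> real) \<Rightarrow> real^'x" where
  "sol e w V = (\<chi> k. det (\<chi> i j. if j = k then bv V$i else Mat e w$i$j) / det (Mat e w))"

definition Gsol :: "('x::finite \<Rightarrow> 'x \<Rightarrow> real) \<Rightarrow> ('x \<Rightarrow> 'x \<Rightarrow> real) \<Rightarrow> real^'x" where
  "Gsol w V = lim (\<lambda>n. sol (1 / real (Suc n)) w V)"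

lemma sol_eq:
  fixes w V :: "'x::finite \<Rightarrow> 'x \<Rightarrow> real"
  assumes w: "\<And>x y. 0 \<le> w x y" and e: "0 < e"
  shows "Mat e w *v sol e w V = bv V"
  using cramer[OF det_Mat[of w e, OF w e]] unfolding sol_def by simp

lemma Gsol_props:
  fixes w V :: "'x::finite \<Rightarrow> 'x \<Rightarrow> real"
  assumes w: "\<And>x y. 0 \<le> w x y" and V: "\<And>x y. V x y \<noteq> 0 \<Longrightarrow> 0 < w x y"
  shows "Mat 0 w *v Gsol w V = bv V" "Bf w (Gsol w V) (Gsol w V) \<le> Sf w V"
    "(\<lambda>n. sol (1 / real (Suc n)) w V) \<longlonglongrightarrow> Gsol w V"
proof -
  define e :: "nat \<Rightarrow> real" where "e n = 1 / real (Suc n)" for n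
  define p where "p n = sol (e n) w V" for n
  define S where "S = Sf w V"
  have epos: "0 < e n" for n by (simp add: e_def)
  have eq: "Mat 0 w *v p n + e n *\<^sub>R p n = bv V" for n
    using sol_eq[OF w epos[of n], where V=V] using Mat_split[of "e n" w "p n"] by (simp add: p_def)
  have en: "e n * (p n \<bullet> p n) \<le> S / 2" for n
  proof -
    have "p n \<bullet> (Mat 0 w *v p n + e n *\<^sub>R p n) = Lf V (p n)"
      using eq[of n] by (simp add: inner_bv)
    then have "Bf w (p n) (p n) + e n * (p n \<bullet> p n) = Lf V (p n)"
      by (simp add: inner_add_right inner_Mat0)
    moreover have "Lf V (p n) \<le> S / 2 + Bf w (p n) (p n) / 2"
      unfolding S_def by (rule Lf_le[OF w V])
    moreover have "0 \<le> Bf w (p n) (p n)" by (rule Bf_nonneg[OF w])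
    ultimately show ?thesis by linarith
  qed
  have Snn: "0 \<le> S"
  proof -
    have "0 \<le> e 0 * (p 0 \<bullet> p 0)" using epos[of 0] by simp
    then show ?thesis using en[of 0] by linarith
  qed
  have e0: "e \<longlonglongrightarrow> 0" unfolding e_def using LIMSEQ_inverse_real_of_nat by (simp add: inverse_eq_divide)
  have ep0: "(\<lambda>n. e n *\<^sub>R p n) \<longlonglongrightarrow> 0"
  proof (rule Lim_null_comparison)
    show "\<forall>\<^sub>F n in sequentially. norm (e n *\<^sub>R p n) \<le> sqrt (e n * (S / 2))"
    proof (intro always_eventually allI)
      fix n
      have "(norm (e n *\<^sub>R p n))\<^sup>2 = (e n)\<^sup>2 * (norm (p n))\<^sup>2"
        by (simp add: power_mult_distrib)
      also have "\<dots> = e n * (e n * (p n \<bullet> p n))"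
        by (simp only: power2_norm_eq_inner) (simp add: power2_eq_square)
      finally have "(norm (e n *\<^sub>R p n))\<^sup>2 = e n * (e n * (p n \<bullet> p n))" .
      also have "\<dots> \<le> e n * (S / 2)" using en[of n] epos[of n] by (simp add: mult_left_mono)
      finally show "norm (e n *\<^sub>R p n) \<le> sqrt (e n * (S / 2))"
        by (simp add: real_le_rsqrt)
    qed
    show "(\<lambda>n. sqrt (e n * (S / 2))) \<longlonglongrightarrow> 0"
      using tendsto_real_sqrt[OF tendsto_mult[OF e0 tendsto_const[of "S/2"]]] by simp
  qed
  have lim1: "(\<lambda>n. Mat 0 w *v p n) \<longlonglongrightarrow> bv V"
  proof -
    have e1: "Mat 0 w *v p n = bv V - e n *\<^sub>R p n" for n
      using eq[of n] by (metis add_diff_cancel_right')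
    have "(\<lambda>n. bv V - e n *\<^sub>R p n) \<longlonglongrightarrow> bv V - 0"
      by (intro tendsto_diff tendsto_const ep0)
    then show ?thesis by (simp only: e1 diff_zero)
  qed
  have cl: "closed (range ((*v) (Mat 0 w)))"
    by (rule closed_subspace, rule linear_subspace_image[OF matrix_vector_mul_linear subspace_UNIV])
  then have H: "\<forall>x l. (\<forall>n. x n \<in> range ((*v) (Mat 0 w))) \<and> x \<longlonglongrightarrow> l \<longrightarrow> l \<in> range ((*v) (Mat 0 w))"
    by (simp only: closed_sequential_limits)
  have "bv V \<in> range ((*v) (Mat 0 w))"
    by (rule H[rule_format, OF conjI[OF _ lim1]]) simp
  then obtain eta where eta: "Mat 0 w *v eta = bv V" by auto
  have bnd: "p n \<bullet> p n \<le> eta \<bullet> eta" for n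
  proof -
    have "Mat 0 w *v (p n - eta) = - (e n *\<^sub>R p n)"
      using eq[of n] eta by (simp add: matrix_vector_mult_diff_distrib algebra_simps)
    then have "Bf w (p n - eta) (p n - eta) = - e n * ((p n - eta) \<bullet> p n)"
      using inner_Mat0[of "p n - eta" w "p n - eta"] by simp
    moreover have "0 \<le> Bf w (p n - eta) (p n - eta)" by (rule Bf_nonneg[OF w])
    ultimately have "e n * ((p n - eta) \<bullet> p n) \<le> 0" by linarith
    then have "(p n - eta) \<bullet> p n \<le> 0" using epos[of n] by (simp add: mult_le_0_iff)
    then have "p n \<bullet> p n \<le> eta \<bullet> p n" by (simp add: inner_diff_left)
    also have "\<dots> \<le> norm eta * norm (p n)" by (rule norm_cauchy_schwarz)
    finally have le1: "norm (p n) * norm (p n) \<le> norm eta * norm (p n)"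
      by (simp add: power2_norm_eq_inner[symmetric] power2_eq_square)
    have "norm (p n) \<le> norm eta"
    proof (cases "norm (p n) = 0")
      case True then show ?thesis by simp
    next
      case False then have "0 < norm (p n)" by simp
      with le1 show ?thesis by (simp add: mult_le_cancel_right)
    qed
    then have "(norm (p n))\<^sup>2 \<le> (norm eta)\<^sup>2" by (simp add: power_mono)
    then show ?thesis by (simp add: power2_norm_eq_inner)
  qed
  have mono: "p n \<bullet> p n + (p m - p n) \<bullet> (p m - p n) \<le> p m \<bullet> p m" if "n \<le> m" for n m
  proof (cases "n = m")
    case True then show ?thesis by simp
  next
    case False
    with that have nm: "n < m" by simp
    have elt: "e m < e n" using nm by (simp add: e_def frac_less2)
    define d where "d = p m - p n"
    have "Mat 0 w *v d = - (e m *\<^sub>R d) + (e n - e m) *\<^sub>R p n"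
      using eq[of n] eq[of m] unfolding d_def
      by (simp add: matrix_vector_mult_diff_distrib algebra_simps)
    then have "Bf w d d = - e m * (d \<bullet> d) + (e n - e m) * (d \<bullet> p n)"
      using inner_Mat0[of d w d] by (simp add: inner_add_right inner_diff_right)
    moreover have "0 \<le> Bf w d d" by (rule Bf_nonneg[OF w])
    moreover have "0 \<le> e m * (d \<bullet> d)" using epos[of m] by simp
    ultimately have "0 \<le> (e n - e m) * (d \<bullet> p n)" by linarith
    then have "0 \<le> d \<bullet> p n" using elt by (simp add: zero_le_mult_iff)
    moreover have "p m \<bullet> p m = p n \<bullet> p n + 2 * (d \<bullet> p n) + d \<bullet> d"
    proof -
      have "p m = p n + d" by (simp add: d_def)
      then show ?thesis by (simp add: inner_add_left inner_add_right inner_commute[of "p n" d])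
    qed
    ultimately show ?thesis unfolding d_def[symmetric] by linarith
  qed
  have inc: "incseq (\<lambda>n. p n \<bullet> p n)"
  proof (rule incseq_SucI)
    fix n
    show "p n \<bullet> p n \<le> p (Suc n) \<bullet> p (Suc n)"
      using mono[of n "Suc n"] inner_ge_zero[of "p (Suc n) - p n"] by linarith
  qed
  obtain L where L: "(\<lambda>n. p n \<bullet> p n) \<longlonglongrightarrow> L"
    using incseq_convergent[OF inc, of "eta \<bullet> eta"] bnd by blast
  then have CL: "Cauchy (\<lambda>n. p n \<bullet> p n)" by (rule LIMSEQ_imp_Cauchy)
  have "Cauchy p"
  proof (rule metric_CauchyI)
    fix r :: real assume r: "0 < r"
    obtain M where M: "\<forall>m\<ge>M. \<forall>n\<ge>M. dist (p m \<bullet> p m) (p n \<bullet> p n) < r\<^sup>2"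
      using metric_CauchyD[OF CL, of "r\<^sup>2"] r by auto
    have "dist (p m) (p n) < r" if "m \<ge> M" "n \<ge> M" for m n
    proof -
      have key: "dist (p a) (p b) < r" if "a \<ge> M" "b \<ge> M" "b \<le> a" for a b
      proof -
        have "(dist (p a) (p b))\<^sup>2 = (p a - p b) \<bullet> (p a - p b)"
          by (simp add: dist_norm power2_norm_eq_inner)
        also have "\<dots> \<le> p a \<bullet> p a - p b \<bullet> p b" using mono[OF that(3)] by simp
        also have "\<dots> < r\<^sup>2"
        proof -
          have "a \<ge> M" using that by simp
          from M[rule_format, OF this that(2)] show ?thesis by (simp add: dist_real_def abs_less_iff)
        qed
        finally show ?thesis using r by (simp add: power_less_imp_less_base)
      qed
      show ?thesis
        using key[of m n] key[of n m] that by (cases "n \<le> m") (auto simp: dist_commute)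
    qed
    then show "\<exists>M. \<forall>m\<ge>M. \<forall>n\<ge>M. dist (p m) (p n) < r" by blast
  qed
  then have "convergent p" by (rule Cauchy_convergent)
  then have "p \<longlonglongrightarrow> lim p" by (simp only: convergent_LIMSEQ_iff)
  moreover have "lim p = Gsol w V" unfolding Gsol_def p_def e_def by simp
  ultimately have plim: "p \<longlonglongrightarrow> Gsol w V" by simp
  then show "(\<lambda>n. sol (1 / real (Suc n)) w V) \<longlonglongrightarrow> Gsol w V" unfolding p_def e_def .
  have "(\<lambda>n. Mat 0 w *v p n) \<longlonglongrightarrow> Mat 0 w *v Gsol w V"
    by (rule bounded_linear.tendsto[OF matrix_vector_mul_bounded_linear plim])
  moreover note lim1
  ultimately show G1: "Mat 0 w *v Gsol w V = bv V" by (rule LIMSEQ_unique)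
  let ?g = "Gsol w V"
  have "Bf w ?g ?g = Lf V ?g" using G1 inner_Mat0[of ?g w ?g] inner_bv[of ?g V] by simp
  moreover have "Lf V ?g \<le> S / 2 + Bf w ?g ?g / 2" unfolding S_def by (rule Lf_le[OF w V])
  ultimately show "Bf w ?g ?g \<le> Sf w V" unfolding S_def by linarith
qed


lemma sol_vec: fixes w V :: "'x::finite \<Rightarrow> 'x \<Rightarrow> real"
  shows "sol e w V $ k = det (\<chi> i j. if j = k then bv V$i else Mat e w$i$j) / det (Mat e w)"
  unfolding sol_def by simp

lemma measurable_det[measurable]:
  fixes A :: "'a \<Rightarrow> real^'n::finite^'n"
  assumes "\<And>i j. (\<lambda>a. A a $ i $ j) \<in> borel_measurable M"
  shows "(\<lambda>a. det (A a)) \<in> borel_measurable M"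
  unfolding det_def using assms by measurable

lemma measurable_sol:
  fixes w V :: "'a \<Rightarrow> 'x::finite \<Rightarrow> 'x \<Rightarrow> real"
  assumes [measurable]: "\<And>x y. (\<lambda>a. w a x y) \<in> borel_measurable M" "\<And>x y. (\<lambda>a. V a x y) \<in> borel_measurable M"
  shows "(\<lambda>a. sol e (w a) (V a) $ k) \<in> borel_measurable M"
proof -
  have m1[measurable]: "(\<lambda>a. Mat e (w a) $ i $ j) \<in> borel_measurable M" for i j
    unfolding Mat_def cc_def vec_lambda_beta by measurable
  have m2[measurable]: "(\<lambda>a. bv (V a) $ i) \<in> borel_measurable M" for i
    unfolding bv_def vec_lambda_beta by measurable
  show ?thesis
    unfolding sol_vec by (intro borel_measurable_divide measurable_det) auto
qed

lemma measurable_Gsol: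
  fixes w V :: "'a \<Rightarrow> 'x::finite \<Rightarrow> 'x \<Rightarrow> real"
  assumes [measurable]: "\<And>x y. (\<lambda>a. w a x y) \<in> borel_measurable M" "\<And>x y. (\<lambda>a. V a x y) \<in> borel_measurable M"
    and pos: "\<And>a x y. a \<in> space M \<Longrightarrow> 0 \<le> w a x y"
    and sup: "\<And>a x y. a \<in> space M \<Longrightarrow> V a x y \<noteq> 0 \<Longrightarrow> 0 < w a x y"
  shows "(\<lambda>a. Gsol (w a) (V a) $ k) \<in> borel_measurable M"
proof (rule borel_measurable_LIMSEQ_real[where u="\<lambda>n a. sol (1 / real (Suc n)) (w a) (V a) $ k"])
  fix a assume a: "a \<in> space M"
  show "(\<lambda>n. sol (1 / real (Suc n)) (w a) (V a) $ k) \<longlonglongrightarrow> Gsol (w a) (V a) $ k"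
    by (rule tendsto_vec_nth, rule Gsol_props(3)) (use pos[OF a] sup[OF a] in auto)
next
  fix n show "(\<lambda>a. sol (1 / real (Suc n)) (w a) (V a) $ k) \<in> borel_measurable M"
    by (rule measurable_sol) measurable
qed

lemma PP_props: assumes "M \<in> PP" shows "prob_space M" "sets M = sets borel" "space M = UNIV"
  "emeasure M prob_simplex = 1"
proof -
  show "prob_space M" "sets M = sets borel" "emeasure M prob_simplex = 1" using assms unfolding PP_def by auto
  then show "space M = UNIV" using sets_eq_imp_space_eq[of M borel] by simp
qed

lemma approx_indicator_lim:
  fixes F :: "'a::metric_space set"
  assumes "closed F" "F \<noteq> {}"
  shows "(\<lambda>n. max 0 (1 - real n * infdist x F)) \<longlonglongrightarrow> indicator F x"
proof (cases "x \<in> F")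
  case True then show ?thesis by simp
next
  case False
  then have pos: "0 < infdist x F" using assms infdist_pos_not_in_closed by blast
  obtain N :: nat where N: "1 / infdist x F < real N" using reals_Archimedean2 by blast
  have "eventually (\<lambda>n. max 0 (1 - real n * infdist x F) = 0) sequentially"
  proof (rule eventually_sequentiallyI[of N])
    fix n assume "N \<le> n"
    then have "1 / infdist x F < real n" using N by (meson less_le_trans of_nat_le_iff)
    then have "1 < real n * infdist x F" using pos by (simp add: field_simps)
    then show "max 0 (1 - real n * infdist x F) = 0" by simp
  qed
  then show ?thesis using False by (simp add: tendsto_eventually)
qed

lemma kernel_meas:
  fixes C :: "real \<Rightarrow> (real^'x::finite) measure"
  assumes PP: "\<forall>t\<in>{0..T}. C t \<in> PP" and T: "0 \<le> T" and wc: "weakly_cont T C"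
  shows "(\<lambda>t. if t \<in> {0..T} then C t else C 0) \<in> borel \<rightarrow>\<^sub>M subprob_algebra borel"
proof -
  define C' where "C' t = (if t \<in> {0..T} then C t else C 0)" for t
  have CP: "C' t \<in> PP" for t using PP T by (auto simp: C'_def)
  note P = PP_props[OF CP]
  have "C' \<in> borel \<rightarrow>\<^sub>M subprob_algebra borel"
  proof (rule measurable_subprob_algebra_generated[where \<Omega>=UNIV and G="Collect closed"])
    show "sets borel = sigma_sets UNIV (Collect closed)" unfolding borel_eq_closed by simp
    show "Int_stable (Collect closed)" by (auto simp: Int_stable_def)
    show "Collect closed \<subseteq> Pow UNIV" by simp
    show "subprob_space (C' a)" for a using P(1) by (rule prob_space_imp_subprob_space)
    show "sets (C' a) = sets borel" for a using P(2) .
    show "(\<lambda>a. emeasure (C' a) UNIV) \<in> borel_measurable borel"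
    proof -
      have "emeasure (C' a) UNIV = 1" for a
        using prob_space.emeasure_space_1[OF P(1)[of a]] P(3)[of a] by simp
      then show ?thesis by simp
    qed
    fix F :: "(real^'x) set" assume "F \<in> Collect closed"
    then have cF: "closed F" by simp
    show "(\<lambda>a. emeasure (C' a) F) \<in> borel_measurable borel"
    proof (cases "F = {}")
      case True then show ?thesis by simp
    next
      case False
      define f where "f n x = max 0 (1 - real n * infdist x F)" for n and x :: "real^'x"
      have fc: "continuous_on UNIV (f n)" for n
        unfolding f_def by (intro continuous_intros continuous_on_infdist)
      have fb: "bounded (range (f n))" for n
      proof -
        have "\<bar>f n x\<bar> \<le> 1" for x
          unfolding f_def using infdist_nonneg[of x F] by (auto simp: abs_if)
        then show ?thesis by (auto simp: bounded_iff)
      qed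
      have fm[measurable]: "f n \<in> borel_measurable borel" for n
        using fc by (rule borel_measurable_continuous_onI)
      have lim: "(\<lambda>n. \<integral>x. f n x \<partial>C' t) \<longlonglongrightarrow> measure (C' t) F" for t
      proof -
        interpret prob_space "C' t" by (rule P(1))
        have Fs: "F \<in> sets (C' t)" using P(2) cF by (simp add: borel_closed)
        have "(\<lambda>n. \<integral>x. f n x \<partial>C' t) \<longlonglongrightarrow> (\<integral>x. indicator F x \<partial>C' t)"
        proof (rule integral_dominated_convergence[where w="\<lambda>_. 1"])
          show "f n \<in> borel_measurable (C' t)" for n
            using fm[of n] P(2) by (simp cong: measurable_cong_sets)
          show "(indicator F :: _ \<Rightarrow> real) \<in> borel_measurable (C' t)" using Fs by simp
          show "integrable (C' t) (\<lambda>_. 1::real)" by simp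
          show "AE x in C' t. (\<lambda>n. f n x) \<longlonglongrightarrow> indicator F x"
            unfolding f_def using approx_indicator_lim[OF cF False] by simp
          show "AE x in C' t. norm (f n x) \<le> 1" for n
            unfolding f_def using infdist_nonneg by (intro AE_I2) (auto simp: abs_if intro!: mult_nonneg_nonneg)
        qed
        also have "(\<integral>x. indicator F x \<partial>C' t) = measure (C' t) F"
          using Fs by simp
        finally show ?thesis .
      qed
      have mn: "(\<lambda>t. \<integral>x. f n x \<partial>C' t) \<in> borel_measurable borel" for n
      proof -
        have e: "(\<lambda>t. \<integral>x. f n x \<partial>C' t) = (\<lambda>t. if t \<in> {0..T} then (\<integral>x. f n x \<partial>C t) else (\<integral>x. f n x \<partial>C 0))"
          by (rule ext) (simp add: C'_def)
        show ?thesis unfolding e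
          using wc fc fb unfolding weakly_cont_def
          by (intro borel_measurable_continuous_on_if) (auto intro: continuous_on_const)
      qed
      have "(\<lambda>t. measure (C' t) F) \<in> borel_measurable borel"
        by (rule borel_measurable_LIMSEQ_real[OF lim mn])
      moreover have "emeasure (C' t) F = ennreal (measure (C' t) F)" for t
      proof -
        interpret prob_space "C' t" by (rule P(1))
        show ?thesis by (rule emeasure_eq_measure)
      qed
      ultimately show ?thesis by simp
    qed
  qed
  then show ?thesis unfolding C'_def .
qed



lemma nn_param_meas:
  fixes f :: "real \<Rightarrow> 'b::second_countable_topology \<Rightarrow> ennreal"
  assumes K: "L \<in> borel \<rightarrow>\<^sub>M subprob_algebra borel"
    and f: "(\<lambda>(t, \<nu>). f t \<nu>) \<in> borel_measurable borel"
  shows "(\<lambda>t. \<integral>\<^sup>+\<nu>. f t \<nu> \<partial>L t) \<in> borel_measurable borel"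
proof (rule nn_integral_measurable_subprob_algebra2[OF _ K])
  show "(\<lambda>(t, \<nu>). f t \<nu>) \<in> borel_measurable (borel \<Otimes>\<^sub>M borel)"
    unfolding borel_prod using f .
qed

lemma int_param_meas:
  fixes f :: "real \<Rightarrow> 'b::second_countable_topology \<Rightarrow> real"
  assumes K: "L \<in> borel \<rightarrow>\<^sub>M subprob_algebra borel"
    and f: "(\<lambda>(t, \<nu>). f t \<nu>) \<in> borel_measurable borel"
  shows "(\<lambda>t. \<integral>\<nu>. f t \<nu> \<partial>L t) \<in> borel_measurable borel"
proof -
  have f2[measurable]: "(\<lambda>(t, \<nu>). f t \<nu>) \<in> borel_measurable (borel \<Otimes>\<^sub>M borel)"
    unfolding borel_prod using f .
  have D: "(\<lambda>x. distr (L x) (borel \<Otimes>\<^sub>M borel) (\<lambda>y. (x, y))) \<in> borel \<rightarrow>\<^sub>M subprob_algebra (borel \<Otimes>\<^sub>M borel)"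
  proof (rule measurable_distr2[OF _ K])
    show "(\<lambda>(x, y). (x, y)) \<in> borel \<Otimes>\<^sub>M borel \<rightarrow>\<^sub>M borel \<Otimes>\<^sub>M borel"
      by (simp add: case_prod_beta' measurable_ident_sets)
  qed
  have "(\<lambda>x. \<integral>z. (\<lambda>(t, \<nu>). f t \<nu>) z \<partial>distr (L x) (borel \<Otimes>\<^sub>M borel) (\<lambda>y. (x, y))) \<in> borel_measurable borel"
    by (rule measurable_compose[OF D integral_measurable_subprob_algebra[OF f2]])
  moreover have "(\<integral>z. (\<lambda>(t, \<nu>). f t \<nu>) z \<partial>distr (L x) (borel \<Otimes>\<^sub>M borel) (\<lambda>y. (x, y))) = (\<integral>\<nu>. f x \<nu> \<partial>L x)" for x
  proof -
    have sL: "sets (L x) = sets borel" using measurable_space[OF K, of x] by (simp add: space_subprob_algebra)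
    have m: "(\<lambda>y. (x, y)) \<in> L x \<rightarrow>\<^sub>M borel \<Otimes>\<^sub>M borel"
      unfolding measurable_cong_sets[OF sL refl] by measurable
    show ?thesis by (subst integral_distr[OF m f2]) simp
  qed
  ultimately show ?thesis by simp
qed


lemma Lam_zero: "s = 0 \<or> t = 0 \<Longrightarrow> Lam s t = 0"
  unfolding Lam_def by auto

lemma Lam_cont: "continuous_on {p. 0 < fst p \<and> 0 < snd p} (\<lambda>p. Lam (fst p) (snd p))"
proof -
  have "continuous_on {p::real\<times>real. 0 < fst p \<and> 0 < snd p} (\<lambda>p. integral (cbox 0 1) (\<lambda>a. fst p powr a * snd p powr (1 - a)))"
    by (rule integral_continuous_on_param) (auto intro!: continuous_intros simp: split_beta)
  then show ?thesis unfolding Lam_def by simp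
qed

lemma Lam_nonneg: "0 \<le> s \<Longrightarrow> 0 \<le> t \<Longrightarrow> 0 \<le> Lam s t"
  unfolding Lam_def
  by (cases "(\<lambda>a. s powr a * t powr (1 - a)) integrable_on {0..1}")
     (auto intro!: integral_nonneg simp: not_integrable_integral)

lemma Lam_le: assumes "0 \<le> s" "0 \<le> t" shows "Lam s t \<le> s + t"
proof (cases "s = 0 \<or> t = 0")
  case True then show ?thesis using assms by (simp add: Lam_zero)
next
  case False
  then have st: "0 < s" "0 < t" using assms by auto
  define m where "m = max s t"
  have int: "(\<lambda>a. s powr a * t powr (1 - a)) integrable_on {0..1}"
    using st by (intro integrable_continuous_interval continuous_intros) auto
  have le: "s powr a * t powr (1 - a) \<le> m" if "a \<in> {0..1}" for a
  proof -
    have "s powr a \<le> m powr a" using that st by (intro powr_mono2) (auto simp: m_def)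
    moreover have "t powr (1 - a) \<le> m powr (1 - a)" using that st by (intro powr_mono2) (auto simp: m_def)
    ultimately have "s powr a * t powr (1 - a) \<le> m powr a * m powr (1 - a)"
      by (intro mult_mono) auto
    also have "\<dots> = m" using st by (simp add: powr_add[symmetric] m_def)
    finally show ?thesis .
  qed
  have "Lam s t \<le> m"
    using Henstock_Kurzweil_Integration.integral_le[OF int integrable_const_ivl le] unfolding Lam_def by simp
  also have "\<dots> \<le> s + t" using st by (simp add: m_def)
  finally show ?thesis .
qed

definition Lam' :: "real \<Rightarrow> real \<Rightarrow> real" where
  "Lam' s t = (if 0 < s \<and> 0 < t then Lam s t else 0)"

lemma Lam'_meas: "(\<lambda>p. Lam' (fst p) (snd p)) \<in> borel_measurable borel"
proof -
  have o: "open {p::real\<times>real. 0 < fst p \<and> 0 < snd p}"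
    by (intro open_Collect_conj open_Collect_less continuous_intros)
  have "(\<lambda>p. if p \<in> {p::real\<times>real. 0 < fst p \<and> 0 < snd p} then Lam (fst p) (snd p) else 0) \<in> borel_measurable borel"
    by (intro borel_measurable_continuous_on_if Lam_cont continuous_on_const borel_open o)
  then show ?thesis unfolding Lam'_def by simp
qed

lemma Lam'_eq: "0 \<le> s \<Longrightarrow> 0 \<le> t \<Longrightarrow> Lam' s t = Lam s t"
  unfolding Lam'_def using Lam_zero[of s t] by auto

lemma meas_nth[measurable (raw)]:
  fixes f :: "'a \<Rightarrow> real^'n::finite"
  shows "f \<in> borel_measurable M \<Longrightarrow> (\<lambda>x. f x $ i) \<in> borel_measurable M"
  by (rule borel_measurable_continuous_on[OF continuous_on_component[OF continuous_on_id]])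

lemma closed_simplex: "closed (prob_simplex :: (real^'x::finite) set)"
proof -
  have e: "prob_simplex = (\<Inter>x. {\<nu>::real^'x. 0 \<le> \<nu>$x}) \<inter> {\<nu>. (\<Sum>x\<in>UNIV. \<nu>$x) = 1}"
    by (auto simp: prob_simplex_def)
  have c1: "closed {\<nu>::real^'x. 0 \<le> \<nu>$x}" for x
    by (intro closed_Collect_le continuous_intros)
  have c2: "closed {\<nu>::real^'x. (\<Sum>x\<in>UNIV. \<nu>$x) = 1}"
    by (intro closed_Collect_eq continuous_intros)
  show ?thesis unfolding e by (rule closed_Int[OF closed_INT c2]) (simp add: c1)
qed

lemma simplex_sets[measurable]: "prob_simplex \<in> sets borel"
  by (rule borel_closed[OF closed_simplex])

lemma simplex_le1: assumes "\<nu> \<in> prob_simplex" shows "0 \<le> \<nu>$x" "\<nu>$x \<le> 1"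
proof -
  show "0 \<le> \<nu>$x" using assms by (simp add: prob_simplex_def)
  have "\<nu>$x \<le> (\<Sum>y\<in>UNIV. \<nu>$y)"
    using assms by (intro member_le_sum) (auto simp: prob_simplex_def)
  then show "\<nu>$x \<le> 1" using assms by (simp add: prob_simplex_def)
qed

lemma compact_simplex: "compact (prob_simplex :: (real^'x::finite) set)"
proof -
  have "bounded (prob_simplex :: (real^'x) set)"
  proof -
    have "norm \<nu> \<le> real CARD('x)" if "\<nu> \<in> prob_simplex" for \<nu> :: "real^'x"
    proof -
      have "norm \<nu> \<le> (\<Sum>i\<in>UNIV. \<bar>\<nu>$i\<bar>)" by (rule norm_le_l1_cart)
      also have "\<dots> \<le> (\<Sum>i\<in>(UNIV::'x set). 1)"
        using simplex_le1[OF that] by (intro sum_mono) auto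
      finally show ?thesis by simp
    qed
    then show ?thesis by (auto simp: bounded_iff)
  qed
  then show ?thesis using closed_simplex by (simp add: compact_eq_bounded_closed)
qed

lemma Q_bound:
  fixes Q :: "real^'x::finite \<Rightarrow> 'x \<Rightarrow> 'x \<Rightarrow> real"
  assumes lip: "\<forall>x y. \<exists>L. L-lipschitz_on prob_simplex (\<lambda>\<mu>. Q \<mu> x y)"
  shows "\<exists>K\<ge>0. \<forall>\<mu>\<in>prob_simplex. \<forall>x y. \<bar>Q \<mu> x y\<bar> \<le> K"
proof -
  have "\<exists>K. \<forall>\<mu>\<in>prob_simplex. \<bar>Q \<mu> x y\<bar> \<le> K" for x y
  proof -
    obtain L where "L-lipschitz_on prob_simplex (\<lambda>\<mu>. Q \<mu> x y)" using lip by blast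
    then have "continuous_on prob_simplex (\<lambda>\<mu>. Q \<mu> x y)" by (rule lipschitz_on_continuous_on)
    then have "compact ((\<lambda>\<mu>. Q \<mu> x y) ` prob_simplex)"
      by (rule compact_continuous_image[OF _ compact_simplex])
    then have "bounded ((\<lambda>\<mu>. Q \<mu> x y) ` prob_simplex)" by (rule compact_imp_bounded)
    then show ?thesis by (auto simp: bounded_iff)
  qed
  then obtain Kf where Kf: "\<And>x y. \<forall>\<mu>\<in>prob_simplex. \<bar>Q \<mu> x y\<bar> \<le> Kf x y" by metis
  define K where "K = (\<Sum>x\<in>UNIV. \<Sum>y\<in>UNIV. \<bar>Kf x y\<bar>)"
  have "Kf x y \<le> K" for x y
  proof -
    have "Kf x y \<le> \<bar>Kf x y\<bar>" by simp
    also have "\<dots> \<le> (\<Sum>y'\<in>UNIV. \<bar>Kf x y'\<bar>)" by (rule member_le_sum) auto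
    also have "\<dots> \<le> K" unfolding K_def by (rule member_le_sum[of x UNIV "\<lambda>x. \<Sum>y'\<in>UNIV. \<bar>Kf x y'\<bar>"]) (auto intro: sum_nonneg)
    finally show ?thesis .
  qed
  moreover have "0 \<le> K" unfolding K_def by (intro sum_nonneg) auto
  ultimately show ?thesis using Kf by (meson order_trans)
qed

definition wT :: "(real^'x::finite \<Rightarrow> 'x \<Rightarrow> 'x \<Rightarrow> real) \<Rightarrow> real^'x \<Rightarrow> 'x \<Rightarrow> 'x \<Rightarrow> real" where
  "wT Q \<nu> x y = (if \<nu> \<in> prob_simplex \<and> x \<noteq> y then Lam' (\<nu>$x * Q \<nu> x y) (\<nu>$y * Q \<nu> y x) else 0)"

lemma Lam'_nonneg: "0 \<le> Lam' s t"
  unfolding Lam'_def by (auto intro: Lam_nonneg)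

lemma wT_nonneg: "0 \<le> wT Q \<nu> x y"
  unfolding wT_def by (auto intro: Lam'_nonneg)

lemma wT_wt:
  assumes rates: "\<forall>\<mu>\<in>prob_simplex. \<forall>x y. x \<noteq> y \<longrightarrow> 0 \<le> Q \<mu> x y"
    and "\<nu> \<in> prob_simplex" "x \<noteq> y"
  shows "wt Q \<nu> x y = wT Q \<nu> x y"
proof -
  have q: "0 \<le> Q \<nu> x y" "0 \<le> Q \<nu> y x" using assms by auto
  have "0 \<le> \<nu>$x * Q \<nu> x y" "0 \<le> \<nu>$y * Q \<nu> y x"
    using assms q simplex_le1 by (auto intro!: mult_nonneg_nonneg)
  then show ?thesis using assms unfolding wT_def wt_def by (simp add: Lam'_eq)
qed

lemma wT_meas:
  fixes Q :: "real^'x::finite \<Rightarrow> 'x \<Rightarrow> 'x \<Rightarrow> real"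
  assumes lip: "\<forall>x y. \<exists>L. L-lipschitz_on prob_simplex (\<lambda>\<mu>. Q \<mu> x y)"
  shows "(\<lambda>\<nu>. wT Q \<nu> x y) \<in> borel_measurable borel"
proof -
  define Qi where "Qi \<nu> x y = indicator prob_simplex \<nu> *\<^sub>R Q \<nu> x y" for \<nu> x y
  have Qm[measurable]: "(\<lambda>\<nu>. Qi \<nu> x y) \<in> borel_measurable borel" for x y
  proof -
    obtain L where "L-lipschitz_on prob_simplex (\<lambda>\<mu>. Q \<mu> x y)" using lip by blast
    then have "continuous_on prob_simplex (\<lambda>\<mu>. Q \<mu> x y)" by (rule lipschitz_on_continuous_on)
    then show ?thesis unfolding Qi_def
      by (intro borel_measurable_continuous_on_indicator simplex_sets)
  qed
  have "(\<lambda>\<nu>. Lam' (\<nu>$x * Qi \<nu> x y) (\<nu>$y * Qi \<nu> y x)) \<in> borel_measurable borel"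
    using measurable_compose[OF _ Lam'_meas, of "\<lambda>\<nu>. (\<nu>$x * Qi \<nu> x y, \<nu>$y * Qi \<nu> y x)" borel]
    by simp
  then have "(\<lambda>\<nu>. if \<nu> \<in> prob_simplex \<and> x \<noteq> y then Lam' (\<nu>$x * Qi \<nu> x y) (\<nu>$y * Qi \<nu> y x) else 0) \<in> borel_measurable borel"
    by measurable
  moreover have "wT Q \<nu> x y = (if \<nu> \<in> prob_simplex \<and> x \<noteq> y then Lam' (\<nu>$x * Qi \<nu> x y) (\<nu>$y * Qi \<nu> y x) else 0)" for \<nu>
    by (simp add: wT_def Qi_def)
  ultimately show ?thesis by simp
qed

lemma wT_bound:
  assumes rates: "\<forall>\<mu>\<in>prob_simplex. \<forall>x y. x \<noteq> y \<longrightarrow> 0 \<le> Q \<mu> x y"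
    and K: "\<forall>\<mu>\<in>prob_simplex. \<forall>x y. \<bar>Q \<mu> x y\<bar> \<le> K" and K0: "0 \<le> K"
  shows "wT Q \<nu> x y \<le> 2 * K"
proof (cases "\<nu> \<in> prob_simplex \<and> x \<noteq> y")
  case True
  have q: "0 \<le> Q \<nu> x y" "0 \<le> Q \<nu> y x" using rates True by auto
  have a: "0 \<le> \<nu>$x * Q \<nu> x y" "0 \<le> \<nu>$y * Q \<nu> y x"
    using True q simplex_le1 by (auto intro!: mult_nonneg_nonneg)
  have b: "\<nu>$x * Q \<nu> x y \<le> K" "\<nu>$y * Q \<nu> y x \<le> K"
  proof -
    have "\<nu>$x * Q \<nu> x y \<le> 1 * \<bar>Q \<nu> x y\<bar>"
      using True q simplex_le1[of \<nu> x] by (intro mult_mono) auto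
    moreover have "\<bar>Q \<nu> x y\<bar> \<le> K" using K True by blast
    ultimately show "\<nu>$x * Q \<nu> x y \<le> K" by linarith
    have "\<nu>$y * Q \<nu> y x \<le> 1 * \<bar>Q \<nu> y x\<bar>"
      using True q simplex_le1[of \<nu> y] by (intro mult_mono) auto
    moreover have "\<bar>Q \<nu> y x\<bar> \<le> K" using K True by blast
    ultimately show "\<nu>$y * Q \<nu> y x \<le> K" by linarith
  qed
  have "wT Q \<nu> x y = Lam (\<nu>$x * Q \<nu> x y) (\<nu>$y * Q \<nu> y x)"
    using True a by (simp add: wT_def Lam'_eq)
  also have "\<dots> \<le> \<nu>$x * Q \<nu> x y + \<nu>$y * Q \<nu> y x" using a by (rule Lam_le)
  finally show ?thesis using b by simp
next
  case False
  then have "wT Q \<nu> x y = 0" by (auto simp: wT_def)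
  then show ?thesis using K0 by simp
qed

definition Vs :: "(real^'x::finite \<Rightarrow> 'x \<Rightarrow> 'x \<Rightarrow> real) \<Rightarrow> (real \<Rightarrow> real^'x \<Rightarrow> 'x \<Rightarrow> 'x \<Rightarrow> real) \<Rightarrow> real \<Rightarrow> real^'x \<Rightarrow> 'x \<Rightarrow> 'x \<Rightarrow> real" where
  "Vs Q V t \<nu> x y = (if 0 < wT Q \<nu> x y then V t \<nu> x y else 0)"

definition PsiV :: "(real^'x::finite \<Rightarrow> 'x \<Rightarrow> 'x \<Rightarrow> real) \<Rightarrow> (real \<Rightarrow> real^'x \<Rightarrow> 'x \<Rightarrow> 'x \<Rightarrow> real) \<Rightarrow> real \<Rightarrow> real^'x \<Rightarrow> real^'x" where
  "PsiV Q V t \<nu> = Gsol (wT Q \<nu>) (Vs Q V t \<nu>)"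

definition Psi :: "(real^'x::finite \<Rightarrow> 'x \<Rightarrow> 'x \<Rightarrow> real) \<Rightarrow> (real \<Rightarrow> real^'x \<Rightarrow> 'x \<Rightarrow> 'x \<Rightarrow> real) \<Rightarrow> real \<Rightarrow> real^'x \<Rightarrow> 'x \<Rightarrow> real" where
  "Psi Q V t \<nu> x = (if \<nu> \<in> prob_simplex then PsiV Q V t \<nu> $ x else 0)"

definition Ga :: "(real^'x::finite \<Rightarrow> 'x \<Rightarrow> 'x \<Rightarrow> real) \<Rightarrow> (real \<Rightarrow> real^'x \<Rightarrow> 'x \<Rightarrow> 'x \<Rightarrow> real) \<Rightarrow> real \<Rightarrow> real^'x \<Rightarrow> ennreal" where
  "Ga Q V t \<nu> = ennreal (1/2) * (\<Sum>x\<in>UNIV. \<Sum>y\<in>UNIV - {x}. alpha (V t \<nu> x y) (wT Q \<nu> x y))"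

lemma Vs_sup: "Vs Q V t \<nu> x y \<noteq> 0 \<Longrightarrow> 0 < wT Q \<nu> x y"
  unfolding Vs_def by (auto split: if_splits)

lemma PsiV_props:
  "Mat 0 (wT Q \<nu>) *v PsiV Q V t \<nu> = bv (Vs Q V t \<nu>)"
  "Bf (wT Q \<nu>) (PsiV Q V t \<nu>) (PsiV Q V t \<nu>) \<le> Sf (wT Q \<nu>) (Vs Q V t \<nu>)"
  unfolding PsiV_def using Gsol_props[of "wT Q \<nu>" "Vs Q V t \<nu>"] wT_nonneg Vs_sup by blast+

lemma divV_grad: "divV (\<lambda>x y. w x y * (p$y - p$x)) = - (1/2) *\<^sub>R (Mat 0 w *v p)"
proof -
  have "(Mat 0 w *v p)$z = (\<Sum>y\<in>UNIV. cc w z y * (p$z - p$y))" for z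
  proof -
    have "(Mat 0 w *v p)$z = (\<Sum>y\<in>UNIV. (if z = y then (\<Sum>u\<in>UNIV. cc w z u) * p$y else 0) - cc w z y * p$y)"
      unfolding matrix_vector_mult_def Mat_def by (auto intro!: sum.cong simp: algebra_simps)
    also have "\<dots> = (\<Sum>u\<in>UNIV. cc w z u) * p$z - (\<Sum>y\<in>UNIV. cc w z y * p$y)"
      by (simp add: sum_subtractf)
    also have "\<dots> = (\<Sum>y\<in>UNIV. cc w z y * (p$z - p$y))"
      by (simp add: sum_distrib_left sum_distrib_right sum_subtractf algebra_simps)
    finally show ?thesis .
  qed
  then show ?thesis
    unfolding divV_def cc_def by (simp add: vec_eq_iff sum_distrib_left algebra_simps sum_negf[symmetric])
qed

lemma divV_bv: "divV V = - (1/2) *\<^sub>R bv V"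
  unfolding divV_def bv_def by (simp add: vec_eq_iff sum_distrib_left algebra_simps sum_negf[symmetric])

lemma bv_cong: assumes "\<And>x y. x \<noteq> y \<Longrightarrow> V x y = V' x y" shows "bv V = bv V'"
proof -
  have "V y z - V z y = V' y z - V' z y" for y z by (cases "y = z") (auto simp: assms)
  then show ?thesis unfolding bv_def by (simp add: vec_eq_iff)
qed

lemma alpha_top: assumes "0 \<le> w" "alpha v w \<noteq> \<top>" "v \<noteq> 0" shows "0 < w"
  using assms unfolding alpha_def by (auto split: if_splits)

lemma good_V:
  assumes rates: "\<forall>\<mu>\<in>prob_simplex. \<forall>x y. x \<noteq> y \<longrightarrow> 0 \<le> Q \<mu> x y"
    and \<nu>: "\<nu> \<in> prob_simplex" and g: "vecA Q \<nu> (V t \<nu>) \<noteq> \<top>" and xy: "x \<noteq> y"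
  shows "V t \<nu> x y = Vs Q V t \<nu> x y"
proof (cases "V t \<nu> x y = 0")
  case True then show ?thesis by (simp add: Vs_def)
next
  case False
  have "(\<Sum>x\<in>UNIV. \<Sum>y\<in>UNIV - {x}. alpha (V t \<nu> x y) (wt Q \<nu> x y)) \<noteq> \<top>"
    using g unfolding vecA_def by (auto simp: ennreal_mult_eq_top_iff)
  then have "alpha (V t \<nu> x y) (wt Q \<nu> x y) \<noteq> \<top>"
    using xy by auto
  then have "0 < wT Q \<nu> x y"
    using alpha_top[OF wT_nonneg _ False] wT_wt[OF rates \<nu> xy] by simp
  then show ?thesis by (simp add: Vs_def)
qed

lemma Psi_grad:
  assumes rates: "\<forall>\<mu>\<in>prob_simplex. \<forall>x y. x \<noteq> y \<longrightarrow> 0 \<le> Q \<mu> x y"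
  shows "wt Q \<nu> x y * (Psi Q V t \<nu> y - Psi Q V t \<nu> x) = wT Q \<nu> x y * (Psi Q V t \<nu> y - Psi Q V t \<nu> x)"
proof (cases "\<nu> \<in> prob_simplex \<and> x \<noteq> y")
  case True then show ?thesis using wT_wt[OF rates] by simp
next
  case False then show ?thesis by (auto simp: Psi_def)
qed

lemma div_eq:
  assumes rates: "\<forall>\<mu>\<in>prob_simplex. \<forall>x y. x \<noteq> y \<longrightarrow> 0 \<le> Q \<mu> x y"
    and \<nu>: "\<nu> \<in> prob_simplex" and g: "vecA Q \<nu> (V t \<nu>) \<noteq> \<top>"
  shows "divV (\<lambda>x y. wt Q \<nu> x y * (Psi Q V t \<nu> y - Psi Q V t \<nu> x)) = divV (V t \<nu>)"
proof -
  let ?p = "PsiV Q V t \<nu>"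
  have e: "wt Q \<nu> x y * (Psi Q V t \<nu> y - Psi Q V t \<nu> x) = wT Q \<nu> x y * (?p$y - ?p$x)" for x y
    using Psi_grad[OF rates, of \<nu> x y V t] \<nu> by (simp add: Psi_def)
  have "(\<lambda>x y. wt Q \<nu> x y * (Psi Q V t \<nu> y - Psi Q V t \<nu> x)) = (\<lambda>x y. wT Q \<nu> x y * (?p$y - ?p$x))"
    by (intro ext e)
  then have "divV (\<lambda>x y. wt Q \<nu> x y * (Psi Q V t \<nu> y - Psi Q V t \<nu> x)) = - (1/2) *\<^sub>R bv (Vs Q V t \<nu>)"
    by (simp add: divV_grad PsiV_props(1))
  also have "bv (Vs Q V t \<nu>) = bv (V t \<nu>)"
    by (rule bv_cong) (use good_V[where Q=Q and \<nu>=\<nu> and V=V and t=t, OF rates \<nu> g] in auto)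
  finally show ?thesis by (simp add: divV_bv)
qed

lemma sum_minus_diag:
  fixes f :: "'x::finite \<Rightarrow> 'a::comm_monoid_add"
  shows "f x = 0 \<Longrightarrow> (\<Sum>y\<in>UNIV - {x}. f y) = (\<Sum>y\<in>UNIV. f y)"
  by (rule sum.mono_neutral_left) auto

lemma Aact_eq:
  assumes rates: "\<forall>\<mu>\<in>prob_simplex. \<forall>x y. x \<noteq> y \<longrightarrow> 0 \<le> Q \<mu> x y"
    and \<nu>: "\<nu> \<in> prob_simplex"
  shows "Aact Q \<nu> (Psi Q V t \<nu>) = ennreal (Bf (wT Q \<nu>) (PsiV Q V t \<nu>) (PsiV Q V t \<nu>) / 2)"
proof -
  let ?p = "PsiV Q V t \<nu>"
  have "(\<Sum>y\<in>UNIV - {x}. (Psi Q V t \<nu> y - Psi Q V t \<nu> x)\<^sup>2 * wt Q \<nu> x y)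
      = (\<Sum>y\<in>UNIV. wT Q \<nu> x y * (?p$y - ?p$x) * (?p$y - ?p$x))" for x
  proof -
    have "(\<Sum>y\<in>UNIV - {x}. (Psi Q V t \<nu> y - Psi Q V t \<nu> x)\<^sup>2 * wt Q \<nu> x y)
        = (\<Sum>y\<in>UNIV - {x}. wT Q \<nu> x y * (?p$y - ?p$x) * (?p$y - ?p$x))"
      using wT_wt[OF rates \<nu>] \<nu> by (intro sum.cong) (auto simp: Psi_def power2_eq_square)
    also have "\<dots> = (\<Sum>y\<in>UNIV. wT Q \<nu> x y * (?p$y - ?p$x) * (?p$y - ?p$x))"
      by (rule sum_minus_diag) simp
    finally show ?thesis .
  qed
  then show ?thesis unfolding Aact_def Bf_def by simp
qed

lemma vecA_eq:
  assumes rates: "\<forall>\<mu>\<in>prob_simplex. \<forall>x y. x \<noteq> y \<longrightarrow> 0 \<le> Q \<mu> x y"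
    and \<nu>: "\<nu> \<in> prob_simplex" and g: "vecA Q \<nu> (V t \<nu>) \<noteq> \<top>"
  shows "vecA Q \<nu> (V t \<nu>) = ennreal (Sf (wT Q \<nu>) (Vs Q V t \<nu>) / 2)"
proof -
  define h where "h x y = (if 0 < wT Q \<nu> x y then (Vs Q V t \<nu> x y)\<^sup>2 / wT Q \<nu> x y else 0)" for x y
  have hnn: "0 \<le> h x y" for x y unfolding h_def by auto
  have al: "alpha (V t \<nu> x y) (wt Q \<nu> x y) = ennreal (h x y)" if "x \<noteq> y" for x y
  proof -
    have w: "wt Q \<nu> x y = wT Q \<nu> x y" using wT_wt[OF rates \<nu> that] .
    have v: "V t \<nu> x y = Vs Q V t \<nu> x y" using good_V[where Q=Q and \<nu>=\<nu> and V=V and t=t, OF rates \<nu> g that] .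
    show ?thesis
    proof (cases "0 < wT Q \<nu> x y")
      case True then show ?thesis unfolding alpha_def h_def w v by simp
    next
      case False
      then have "wT Q \<nu> x y = 0" using wT_nonneg[of Q \<nu> x y] by simp
      moreover then have "Vs Q V t \<nu> x y = 0" by (simp add: Vs_def)
      ultimately show ?thesis unfolding alpha_def h_def w v by simp
    qed
  qed
  have "(\<Sum>y\<in>UNIV - {x}. alpha (V t \<nu> x y) (wt Q \<nu> x y)) = ennreal (\<Sum>y\<in>UNIV. h x y)" for x
  proof -
    have "(\<Sum>y\<in>UNIV - {x}. alpha (V t \<nu> x y) (wt Q \<nu> x y)) = (\<Sum>y\<in>UNIV - {x}. ennreal (h x y))"
      using al by (intro sum.cong) auto
    also have "\<dots> = ennreal (\<Sum>y\<in>UNIV - {x}. h x y)" using hnn by simp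
    also have "(\<Sum>y\<in>UNIV - {x}. h x y) = (\<Sum>y\<in>UNIV. h x y)"
      by (rule sum_minus_diag) (simp add: h_def wT_def)
    finally show ?thesis .
  qed
  then have "vecA Q \<nu> (V t \<nu>) = ennreal (1/2) * (\<Sum>x\<in>UNIV. ennreal (\<Sum>y\<in>UNIV. h x y))"
    unfolding vecA_def by simp
  also have "\<dots> = ennreal (1/2) * ennreal (\<Sum>x\<in>UNIV. \<Sum>y\<in>UNIV. h x y)"
    using hnn by (subst sum_ennreal) (auto intro: sum_nonneg)
  also have "\<dots> = ennreal (1/2 * (\<Sum>x\<in>UNIV. \<Sum>y\<in>UNIV. h x y))"
    by (rule ennreal_mult[symmetric]) (auto intro!: sum_nonneg hnn)
  also have "\<dots> = ennreal (Sf (wT Q \<nu>) (Vs Q V t \<nu>) / 2)"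
    unfolding Sf_def h_def[symmetric] by simp
  finally show ?thesis .
qed

lemma Aact_le:
  assumes rates: "\<forall>\<mu>\<in>prob_simplex. \<forall>x y. x \<noteq> y \<longrightarrow> 0 \<le> Q \<mu> x y"
    and \<nu>: "\<nu> \<in> prob_simplex"
  shows "Aact Q \<nu> (Psi Q V t \<nu>) \<le> vecA Q \<nu> (V t \<nu>)"
proof (cases "vecA Q \<nu> (V t \<nu>) = \<top>")
  case True then show ?thesis by simp
next
  case False
  show ?thesis unfolding Aact_eq[OF rates \<nu>] vecA_eq[where Q=Q and \<nu>=\<nu> and V=V and t=t, OF rates \<nu> False]
    using PsiV_props(2)[of Q \<nu> V t] by (intro ennreal_leI) simp
qed

lemma Ga_eq:
  assumes rates: "\<forall>\<mu>\<in>prob_simplex. \<forall>x y. x \<noteq> y \<longrightarrow> 0 \<le> Q \<mu> x y"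
    and \<nu>: "\<nu> \<in> prob_simplex"
  shows "Ga Q V t \<nu> = vecA Q \<nu> (V t \<nu>)"
  unfolding Ga_def vecA_def using wT_wt[OF rates \<nu>] by (auto intro!: sum.cong arg_cong2[where f="(*)"])

lemma abs_wg: fixes w g :: real assumes "0 \<le> w" shows "\<bar>w * g\<bar> \<le> w / 2 + w * g * g / 2"
proof -
  have "0 \<le> (\<bar>g\<bar> - 1)\<^sup>2" by simp
  then have "2 * \<bar>g\<bar> \<le> 1 + g * g" by (simp add: power2_eq_square algebra_simps abs_mult_self_eq)
  then have "w * (2 * \<bar>g\<bar>) \<le> w * (1 + g * g)" using assms by (rule mult_left_mono)
  then show ?thesis using assms by (simp add: abs_mult algebra_simps)
qed

lemma flux_bound:
  assumes rates: "\<forall>\<mu>\<in>prob_simplex. \<forall>x y. x \<noteq> y \<longrightarrow> 0 \<le> Q \<mu> x y"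
    and Kw: "\<And>\<nu> x y. wT Q \<nu> x y \<le> Kw"
  shows "ennreal \<bar>wt Q \<nu> x y * (Psi Q V t \<nu> y - Psi Q V t \<nu> x)\<bar> \<le> ennreal (Kw/2) + Ga Q V t \<nu>"
proof (cases "\<nu> \<in> prob_simplex")
  case False then show ?thesis by (simp add: Psi_def)
next
  case True
  let ?p = "PsiV Q V t \<nu>"
  let ?w = "wT Q \<nu> x y" and ?g = "?p$y - ?p$x"
  have e: "wt Q \<nu> x y * (Psi Q V t \<nu> y - Psi Q V t \<nu> x) = ?w * ?g"
    using Psi_grad[OF rates, of \<nu> x y V t] True by (simp add: Psi_def)
  have w0: "0 \<le> ?w" by (rule wT_nonneg)
  have a: "\<bar>?w * ?g\<bar> \<le> ?w / 2 + ?w * ?g * ?g / 2" by (rule abs_wg[OF w0])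
  have b: "?w * ?g * ?g \<le> Bf (wT Q \<nu>) ?p ?p"
  proof -
    have nn: "0 \<le> wT Q \<nu> x' y' * (?p$y' - ?p$x') * (?p$y' - ?p$x')" for x' y'
      using wT_nonneg[of Q \<nu> x' y'] by (simp add: mult.assoc)
    have "?w * ?g * ?g \<le> (\<Sum>y'\<in>UNIV. wT Q \<nu> x y' * (?p$y' - ?p$x) * (?p$y' - ?p$x))"
      by (rule member_le_sum[of y UNIV "\<lambda>y'. wT Q \<nu> x y' * (?p$y' - ?p$x) * (?p$y' - ?p$x)"]) (auto intro: nn)
    also have "\<dots> \<le> Bf (wT Q \<nu>) ?p ?p" unfolding Bf_def
      by (rule member_le_sum[of x UNIV "\<lambda>x'. \<Sum>y'\<in>UNIV. wT Q \<nu> x' y' * (?p$y' - ?p$x') * (?p$y' - ?p$x')"])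
         (auto intro: sum_nonneg nn)
    finally show ?thesis .
  qed
  have "\<bar>?w * ?g\<bar> \<le> Kw/2 + Bf (wT Q \<nu>) ?p ?p / 2" using a b Kw[of \<nu> x y] by linarith
  then have "ennreal \<bar>?w * ?g\<bar> \<le> ennreal (Kw/2 + Bf (wT Q \<nu>) ?p ?p / 2)" by (rule ennreal_leI)
  also have "\<dots> = ennreal (Kw/2) + ennreal (Bf (wT Q \<nu>) ?p ?p / 2)"
  proof (rule ennreal_plus)
    show "0 \<le> Kw / 2" using Kw[of \<nu> x y] w0 by simp
    show "0 \<le> Bf (wT Q \<nu>) ?p ?p / 2" using Bf_nonneg[OF wT_nonneg] by simp
  qed
  also have "ennreal (Bf (wT Q \<nu>) ?p ?p / 2) = Aact Q \<nu> (Psi Q V t \<nu>)"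
    using Aact_eq[OF rates True] by simp
  also have "\<dots> \<le> vecA Q \<nu> (V t \<nu>)" by (rule Aact_le[OF rates True])
  also have "\<dots> = Ga Q V t \<nu>" using Ga_eq[OF rates True] by simp
  finally show ?thesis using e by simp
qed

lemma alpha_meas[measurable]:
  assumes [measurable]: "f \<in> borel_measurable M" "g \<in> borel_measurable M"
  shows "(\<lambda>a. alpha (f a) (g a)) \<in> borel_measurable M"
  unfolding alpha_def by measurable

lemma snd_meas: "(snd :: real \<times> 'b::{second_countable_topology,real_normed_vector} \<Rightarrow> 'b) \<in> borel_measurable borel"
  by (rule borel_measurable_continuous_onI) (intro continuous_intros)

lemma fst_meas: "(fst :: real \<times> 'b::{second_countable_topology,real_normed_vector} \<Rightarrow> real) \<in> borel_measurable borel"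
  by (rule borel_measurable_continuous_onI) (intro continuous_intros)

locale meas_setup =
  fixes Q :: "real^'x::finite \<Rightarrow> 'x \<Rightarrow> 'x \<Rightarrow> real" and V :: "real \<Rightarrow> real^'x \<Rightarrow> 'x \<Rightarrow> 'x \<Rightarrow> real"
  assumes lip: "\<forall>x y. \<exists>L. L-lipschitz_on prob_simplex (\<lambda>\<mu>. Q \<mu> x y)"
    and Vm: "\<forall>x y. (\<lambda>(t, \<nu>). V t \<nu> x y) \<in> borel_measurable borel"
begin

lemma wT2[measurable]: "(\<lambda>z::real \<times> (real^'x). wT Q (snd z) x y) \<in> borel_measurable borel"
  by (rule measurable_compose[OF snd_meas wT_meas[OF lip]])

lemma V2[measurable]: "(\<lambda>z::real \<times> (real^'x). V (fst z) (snd z) x y) \<in> borel_measurable borel"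
  using Vm by (simp add: split_beta')

lemma Vs2[measurable]: "(\<lambda>z::real \<times> (real^'x). Vs Q V (fst z) (snd z) x y) \<in> borel_measurable borel"
  unfolding Vs_def by measurable

lemma Psi2[measurable]: "(\<lambda>z::real \<times> (real^'x). Psi Q V (fst z) (snd z) x) \<in> borel_measurable borel"
proof -
  have g: "(\<lambda>z::real \<times> (real^'x). Gsol (wT Q (snd z)) (Vs Q V (fst z) (snd z)) $ x) \<in> borel_measurable borel"
    by (rule measurable_Gsol) (auto intro: wT_nonneg Vs_sup)
  have s: "(\<lambda>z::real \<times> (real^'x). snd z) \<in> borel_measurable borel" by (rule snd_meas)
  show ?thesis unfolding Psi_def PsiV_def
    using g s by measurable
qed

lemma Ga2[measurable]: "(\<lambda>z::real \<times> (real^'x). Ga Q V (fst z) (snd z)) \<in> borel_measurable borel"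
  unfolding Ga_def by measurable

end

lemma section_meas:
  fixes f :: "real \<times> 'b::{second_countable_topology,real_normed_vector} \<Rightarrow> 'c"
  assumes f: "f \<in> borel \<rightarrow>\<^sub>M N" and s: "sets M = sets borel"
  shows "(\<lambda>\<nu>. f (t, \<nu>)) \<in> M \<rightarrow>\<^sub>M N"
proof -
  have "(\<lambda>\<nu>::'b. (t, \<nu>)) \<in> borel \<rightarrow>\<^sub>M borel"
    by (rule borel_measurable_continuous_onI) (intro continuous_intros)
  then have "(\<lambda>\<nu>. f (t, \<nu>)) \<in> borel \<rightarrow>\<^sub>M N" using f by (rule measurable_compose)
  then show ?thesis by (simp add: measurable_cong_sets[OF s refl])
qed

lemma AE_simplex:
  assumes "M \<in> PP" shows "AE \<nu> in M. \<nu> \<in> prob_simplex"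
proof -
  note P = PP_props[OF assms]
  interpret prob_space M by (rule P(1))
  have ev: "prob_simplex \<in> events" using P(2) by simp
  have "prob prob_simplex = 1" using P(4) emeasure_eq_measure by simp
  then show ?thesis using AE_in_set_eq_1[OF ev] by simp
qed

theorem proposition2p18:
  fixes Q :: "real^'x::finite \<Rightarrow> 'x \<Rightarrow> 'x \<Rightarrow> real"
    and T :: real
    and M N :: "(real^'x) measure"
    and C :: "real \<Rightarrow> (real^'x) measure"
    and V :: "real \<Rightarrow> real^'x \<Rightarrow> 'x \<Rightarrow> 'x \<Rightarrow> real"
  assumes rates: "\<forall>\<mu>\<in>prob_simplex. \<forall>x y. x \<noteq> y \<longrightarrow> 0 \<le> Q \<mu> x y"
    and irred: "\<forall>\<mu>\<in>prob_simplex. irreducible_rates (Q \<mu>)"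
    and rev: "\<forall>\<mu>\<in>prob_simplex. reversible_gibbs (Q \<mu>)"
    and lip: "\<forall>x y. \<exists>L. L-lipschitz_on prob_simplex (\<lambda>\<mu>. Q \<mu> x y)"
    and T: "0 < T"
    and M: "M \<in> PP" and N: "N \<in> PP"
    and CV: "vCE T M N C V"
    and fin: "vAction Q T C V < \<infinity>"
  shows "\<exists>\<Psi> :: real \<Rightarrow> real^'x \<Rightarrow> 'x \<Rightarrow> real.
           (\<forall>x. (\<lambda>(t, \<nu>). \<Psi> t \<nu> x) \<in> borel_measurable borel) \<and>
           CE Q T M N C \<Psi> \<and> Action Q T C \<Psi> \<le> vAction Q T C V"
proof -
  have CPP: "\<forall>t\<in>{0..T}. C t \<in> PP" and wc: "weakly_cont T C" and C0: "C 0 = M" and CT: "C T = N"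
    and Vm: "\<forall>x y. (\<lambda>(t, \<nu>). V t \<nu> x y) \<in> borel_measurable borel"
    and CEV: "\<And>\<phi> D. test_fun T \<phi> D \<Longrightarrow>
        (\<integral>t. indicator {0..T} t * (\<integral>\<nu>. fst (D (t, \<nu>)) - snd (D (t, \<nu>)) \<bullet> divV (V t \<nu>) \<partial>C t) \<partial>lborel) = 0"
    using CV unfolding vCE_def by auto
  interpret meas_setup Q V using lip Vm by unfold_locales
  obtain K where K0: "0 \<le> K" and K: "\<forall>\<mu>\<in>prob_simplex. \<forall>x y. \<bar>Q \<mu> x y\<bar> \<le> K"
    using Q_bound[OF lip] by blast
  define Kw where "Kw = 2 * K"
  have Kw: "\<And>\<nu> x y. wT Q \<nu> x y \<le> Kw" unfolding Kw_def by (rule wT_bound[OF rates K K0])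
  have Kw0: "0 \<le> Kw" using K0 by (simp add: Kw_def)
  define C' where "C' t = (if t \<in> {0..T} then C t else C 0)" for t
  have C'm: "C' \<in> borel \<rightarrow>\<^sub>M subprob_algebra borel"
    unfolding C'_def using kernel_meas[OF CPP _ wc] T by simp
  have C'PP: "C' t \<in> PP" for t using CPP T by (auto simp: C'_def)
  have sC: "sets (C' t) = sets borel" for t using PP_props(2)[OF C'PP] .
  define \<Psi> where "\<Psi> = Psi Q V"
  define h where "h t = indicator {0..T} t * (\<integral>\<^sup>+\<nu>. Ga Q V t \<nu> \<partial>C' t)" for t
  have Ga_c: "(\<lambda>(t, \<nu>). Ga Q V t \<nu>) \<in> borel_measurable borel"
    using Ga2 by (simp add: split_beta')
  have hm: "h \<in> borel_measurable borel"
    unfolding h_def by (intro borel_measurable_times_ennreal borel_measurable_indicator nn_param_meas[OF C'm Ga_c]) simp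
  have vA: "vAction Q T C V = (\<integral>\<^sup>+t. h t \<partial>lborel)"
    unfolding vAction_def
  proof (intro nn_integral_cong)
    fix t :: real
    show "indicator {0..T} t * (\<integral>\<^sup>+\<nu>. vecA Q \<nu> (V t \<nu>) \<partial>C t) = h t"
    proof (cases "t \<in> {0..T}")
      case True
      have ae: "AE \<nu> in C t. \<nu> \<in> prob_simplex" using AE_simplex CPP True by blast
      then have "AE \<nu> in C t. vecA Q \<nu> (V t \<nu>) = Ga Q V t \<nu>"
        by eventually_elim (simp add: Ga_eq[OF rates])
      then have "(\<integral>\<^sup>+\<nu>. vecA Q \<nu> (V t \<nu>) \<partial>C t) = (\<integral>\<^sup>+\<nu>. Ga Q V t \<nu> \<partial>C t)"
        by (rule nn_integral_cong_AE)
      then show ?thesis using True by (simp add: h_def C'_def)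
    qed (simp add: h_def)
  qed
  have hfin: "(\<integral>\<^sup>+t. h t \<partial>lborel) \<noteq> \<top>" using fin vA by simp
  have AEh: "AE t in lborel. h t \<noteq> \<top>"
    using nn_integral_PInf_AE[of h lborel] hm hfin by simp
  have good: "AE \<nu> in C t. \<nu> \<in> prob_simplex \<and> vecA Q \<nu> (V t \<nu>) \<noteq> \<top>"
    if t: "t \<in> {0..T}" and ht: "h t \<noteq> \<top>" for t
  proof -
    have sCt: "sets (C t) = sets borel" using sC[of t] t by (simp add: C'_def)
    have "(\<integral>\<^sup>+\<nu>. Ga Q V t \<nu> \<partial>C t) \<noteq> \<top>" using ht t by (simp add: h_def C'_def)
    moreover have "(\<lambda>\<nu>. Ga Q V t \<nu>) \<in> borel_measurable (C t)"
      using section_meas[OF Ga2 sCt, of t] by simp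
    ultimately have "AE \<nu> in C t. Ga Q V t \<nu> \<noteq> \<top>" using nn_integral_PInf_AE[of "\<lambda>\<nu>. Ga Q V t \<nu>" "C t"] by simp
    moreover have "AE \<nu> in C t. \<nu> \<in> prob_simplex" using AE_simplex CPP t by blast
    ultimately show ?thesis by eventually_elim (simp add: Ga_eq[OF rates])
  qed
  show ?thesis
  proof (intro exI conjI allI)
    fix x
    show "(\<lambda>(t, \<nu>). \<Psi> t \<nu> x) \<in> borel_measurable borel"
      using Psi2[of x] by (simp add: \<Psi>_def split_beta')
  next
    show "Action Q T C \<Psi> \<le> vAction Q T C V"
      unfolding Action_def vAction_def
    proof (intro nn_integral_mono)
      fix t :: real
      show "indicator {0..T} t * (\<integral>\<^sup>+\<nu>. Aact Q \<nu> (\<Psi> t \<nu>) \<partial>C t) \<le> indicator {0..T} t * (\<integral>\<^sup>+\<nu>. vecA Q \<nu> (V t \<nu>) \<partial>C t)"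
      proof (cases "t \<in> {0..T}")
        case True
        have ae: "AE \<nu> in C t. \<nu> \<in> prob_simplex" using AE_simplex CPP True by blast
        then have "AE \<nu> in C t. Aact Q \<nu> (\<Psi> t \<nu>) \<le> vecA Q \<nu> (V t \<nu>)"
          by eventually_elim (simp add: \<Psi>_def Aact_le[OF rates])
        then have "(\<integral>\<^sup>+\<nu>. Aact Q \<nu> (\<Psi> t \<nu>) \<partial>C t) \<le> (\<integral>\<^sup>+\<nu>. vecA Q \<nu> (V t \<nu>) \<partial>C t)"
          by (rule nn_integral_mono_AE)
        then show ?thesis by (intro mult_left_mono) auto
      qed simp
    qed
  next
    show "CE Q T M N C \<Psi>"
      unfolding CE_def vCE_def
    proof (intro conjI)
      show "\<forall>t\<in>{0..T}. C t \<in> PP" by (rule CPP)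
      show "weakly_cont T C" by (rule wc)
      show "C 0 = M" by (rule C0)
      show "C T = N" by (rule CT)
      have Wz: "(\<lambda>(t, \<nu>). wt Q \<nu> x y * (\<Psi> t \<nu> y - \<Psi> t \<nu> x))
          = (\<lambda>z. wT Q (snd z) x y * (Psi Q V (fst z) (snd z) y - Psi Q V (fst z) (snd z) x))" for x y
        by (rule ext) (simp add: split_beta' \<Psi>_def Psi_grad[OF rates])
      have Wm[measurable]: "(\<lambda>z. wT Q (snd z) x y * (Psi Q V (fst z) (snd z) y - Psi Q V (fst z) (snd z) x))
          \<in> borel_measurable borel" for x y
        by measurable
      show "\<forall>x y. (\<lambda>(t, \<nu>). wt Q \<nu> x y * (\<Psi> t \<nu> y - \<Psi> t \<nu> x)) \<in> borel_measurable borel"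
        unfolding Wz by simp
      show "\<forall>x y. (\<integral>\<^sup>+ t. indicator {0..T} t * (\<integral>\<^sup>+ \<nu>. ennreal \<bar>wt Q \<nu> x y * (\<Psi> t \<nu> y - \<Psi> t \<nu> x)\<bar> \<partial>C t) \<partial>lborel) < \<infinity>"
      proof (intro allI)
        fix x y
        let ?c = "ennreal (Kw / 2)"
        have pt: "indicator {0..T} t * (\<integral>\<^sup>+ \<nu>. ennreal \<bar>wt Q \<nu> x y * (\<Psi> t \<nu> y - \<Psi> t \<nu> x)\<bar> \<partial>C t)
            \<le> indicator {0..T} t * ?c + h t" for t
        proof (cases "t \<in> {0..T}")
          case True
          have sCt: "sets (C t) = sets borel" using sC[of t] True by (simp add: C'_def)
          interpret prob_space "C t" using PP_props(1) CPP True by blast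
          have Gm: "(\<lambda>\<nu>. Ga Q V t \<nu>) \<in> borel_measurable (C t)"
            using section_meas[OF Ga2 sCt, of t] by simp
          have "(\<integral>\<^sup>+ \<nu>. ennreal \<bar>wt Q \<nu> x y * (\<Psi> t \<nu> y - \<Psi> t \<nu> x)\<bar> \<partial>C t)
              \<le> (\<integral>\<^sup>+ \<nu>. ?c + Ga Q V t \<nu> \<partial>C t)"
            unfolding \<Psi>_def by (intro nn_integral_mono flux_bound[OF rates Kw])
          also have "\<dots> = (\<integral>\<^sup>+ \<nu>. ?c \<partial>C t) + (\<integral>\<^sup>+ \<nu>. Ga Q V t \<nu> \<partial>C t)"
            by (rule nn_integral_add) (use Gm in auto)
          also have "(\<integral>\<^sup>+ \<nu>. ?c \<partial>C t) = ?c" by (simp add: emeasure_space_1)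
          also have "(\<integral>\<^sup>+ \<nu>. Ga Q V t \<nu> \<partial>C t) = h t" using True by (simp add: h_def C'_def)
          finally show ?thesis using True by simp
        qed simp
        have "(\<integral>\<^sup>+ t. indicator {0..T} t * (\<integral>\<^sup>+ \<nu>. ennreal \<bar>wt Q \<nu> x y * (\<Psi> t \<nu> y - \<Psi> t \<nu> x)\<bar> \<partial>C t) \<partial>lborel)
            \<le> (\<integral>\<^sup>+ t. indicator {0..T} t * ?c + h t \<partial>lborel)"
          by (intro nn_integral_mono pt)
        also have "\<dots> = (\<integral>\<^sup>+ t. ?c * indicator {0..T} t \<partial>lborel) + (\<integral>\<^sup>+ t. h t \<partial>lborel)"
          by (subst nn_integral_add) (use hm in \<open>auto simp: mult.commute\<close>)
        also have "(\<integral>\<^sup>+ t. ?c * indicator {0..T} t \<partial>lborel) = ?c * ennreal T"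
          using T by (subst nn_integral_cmult_indicator) auto
        finally have "(\<integral>\<^sup>+ t. indicator {0..T} t * (\<integral>\<^sup>+ \<nu>. ennreal \<bar>wt Q \<nu> x y * (\<Psi> t \<nu> y - \<Psi> t \<nu> x)\<bar> \<partial>C t) \<partial>lborel)
            \<le> ?c * ennreal T + (\<integral>\<^sup>+ t. h t \<partial>lborel)" .
        also have "\<dots> < \<infinity>"
        proof -
          have "?c * ennreal T = ennreal (Kw / 2 * T)" using Kw0 T by (intro ennreal_mult[symmetric]) auto
          then show ?thesis using hfin by (simp add: less_top[symmetric])
        qed
        finally show "(\<integral>\<^sup>+ t. indicator {0..T} t * (\<integral>\<^sup>+ \<nu>. ennreal \<bar>wt Q \<nu> x y * (\<Psi> t \<nu> y - \<Psi> t \<nu> x)\<bar> \<partial>C t) \<partial>lborel) < \<infinity>" .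
      qed
      show "\<forall>\<phi> D. test_fun T \<phi> D \<longrightarrow>
        (\<integral>t. indicator {0..T} t * (\<integral>\<nu>. fst (D (t, \<nu>)) - snd (D (t, \<nu>)) \<bullet> divV (\<lambda>x y. wt Q \<nu> x y * (\<Psi> t \<nu> y - \<Psi> t \<nu> x)) \<partial>C t) \<partial>lborel) = 0"
      proof (intro allI impI)
        fix \<phi> :: "real \<times> (real^'x) \<Rightarrow> real" and D :: "real \<times> (real^'x) \<Rightarrow> real \<times> (real^'x)"
        assume tf: "test_fun T \<phi> D"
        have Dc: "continuous_on UNIV D" using tf unfolding test_fun_def by blast
        have Dm1[measurable]: "(\<lambda>z. fst (D z)) \<in> borel_measurable borel"
          by (rule borel_measurable_continuous_onI) (intro continuous_intros Dc)
        have Dm2[measurable]: "(\<lambda>z. snd (D z) $ i) \<in> borel_measurable borel" for i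
          by (rule borel_measurable_continuous_onI) (intro continuous_intros Dc)
        define W where "W t \<nu> x y = wt Q \<nu> x y * (\<Psi> t \<nu> y - \<Psi> t \<nu> x)" for t \<nu> x y
        define F where "F X z = fst (D z) - snd (D z) \<bullet> divV (X (fst z) (snd z))"
          for X :: "real \<Rightarrow> real^'x \<Rightarrow> 'x \<Rightarrow> 'x \<Rightarrow> real" and z
        have Fm: "F X \<in> borel_measurable borel"
          if Xm[measurable]: "\<And>x y. (\<lambda>z::real \<times> (real^'x). X (fst z) (snd z) x y) \<in> borel_measurable borel" for X
          unfolding F_def inner_vec_def divV_def vec_lambda_beta by measurable
        have WW: "(\<lambda>z::real \<times> (real^'x). W (fst z) (snd z) x y) = (\<lambda>z. wT Q (snd z) x y * (Psi Q V (fst z) (snd z) y - Psi Q V (fst z) (snd z) x))" for x y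
          unfolding W_def using Wz[of x y] by (simp add: split_beta')
        have FW: "F W \<in> borel_measurable borel" by (rule Fm) (simp add: WW)
        have FV: "F V \<in> borel_measurable borel" by (rule Fm) simp
        define I where "I X t = indicator {0..T} t * (\<integral>\<nu>. F X (t, \<nu>) \<partial>C t)" for X t
        have Ieq: "I X = (\<lambda>t. indicator {0..T} t * (\<integral>\<nu>. F X (t, \<nu>) \<partial>C' t))" for X
          by (rule ext) (simp add: I_def C'_def indicator_def)
        have Im: "I X \<in> borel_measurable borel" if "F X \<in> borel_measurable borel" for X
        proof -
          have "(\<lambda>(t, \<nu>). F X (t, \<nu>)) \<in> borel_measurable borel" using that by (simp add: split_beta')
          from int_param_meas[OF C'm this] show ?thesis unfolding Ieq by measurable
        qed
        have AEI: "AE t in lborel. I V t = I W t"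
          using AEh
        proof eventually_elim
          case (elim t)
          show ?case
          proof (cases "t \<in> {0..T}")
            case False then show ?thesis by (simp add: I_def)
          next
            case True
            have sCt: "sets (C t) = sets borel" using sC[of t] True by (simp add: C'_def)
            have m1: "(\<lambda>\<nu>. F V (t, \<nu>)) \<in> borel_measurable (C t)" by (rule section_meas[OF FV sCt])
            have m2: "(\<lambda>\<nu>. F W (t, \<nu>)) \<in> borel_measurable (C t)" by (rule section_meas[OF FW sCt])
            have "AE \<nu> in C t. F V (t, \<nu>) = F W (t, \<nu>)"
              using good[OF True elim]
            proof eventually_elim
              case (elim \<nu>)
              then show ?case unfolding F_def W_def \<Psi>_def using div_eq[OF rates, of \<nu> V t] by simp
            qed
            then have "(\<integral>\<nu>. F V (t, \<nu>) \<partial>C t) = (\<integral>\<nu>. F W (t, \<nu>) \<partial>C t)"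
              by (rule integral_cong_AE[OF m1 m2])
            then show ?thesis by (simp add: I_def)
          qed
        qed
        have "(\<integral>t. I W t \<partial>lborel) = (\<integral>t. I V t \<partial>lborel)"
          by (rule integral_cong_AE) (use Im[OF FW] Im[OF FV] AEI in \<open>auto elim: AE_mp\<close>)
        also have "\<dots> = 0" using CEV[OF tf] by (simp add: I_def F_def)
        finally have "(\<integral>t. I W t \<partial>lborel) = 0" .
        then show "(\<integral>t. indicator {0..T} t * (\<integral>\<nu>. fst (D (t, \<nu>)) - snd (D (t, \<nu>)) \<bullet> divV (\<lambda>x y. wt Q \<nu> x y * (\<Psi> t \<nu> y - \<Psi> t \<nu> x)) \<partial>C t) \<partial>lborel) = 0"
        proof -
          have Wfun: "W t \<nu> = (\<lambda>x y. wt Q \<nu> x y * (\<Psi> t \<nu> y - \<Psi> t \<nu> x))" for t \<nu>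
            by (simp add: W_def fun_eq_iff)
          show ?thesis using \<open>(\<integral>t. I W t \<partial>lborel) = 0\<close> by (simp add: I_def F_def Wfun)
        qed
      qed
    qed
  qed
qed

end
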